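(* Let $t$ be a positive integer and let $M$ be a $t$-spike of order $r$. Then $r(M) = r^*(M) = r$, where $r^*$ denotes the rank function of the dual $M^*$.
   Context: For a positive integer $t$, a matroid $M$ is a $t$-spike of order $r$ (where $r\ge t$) if there is a partition $(A_1,\ldots,A_r)$ of $E(M)$ into 2-element sets (arms) such that, for every $t$-element subset $J\subseteq\{1,\dots,r\}$, the set $\bigcup_{j\in J}A_j$ is both a circuit and a cocircuit of $M$. *)

theory Defs
  imports Main
begin

definition matroid :: "'a set \<Rightarrow> ('a set \<Rightarrow> bool) \<Rightarrow> bool" where
  "matroid E indep \<longleftrightarrow>
     finite E \<and>
     indep {} \<and>
     (\<forall>X. indep X \<longrightarrow> X \<subseteq> E) \<and>
     (\<forall>X Y. indep Y \<and> X \<subseteq> Y \<longrightarrow> indep X) \<and>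
     (\<forall>X Y. indep X \<and> indep Y \<and> card X < card Y \<longrightarrow> (\<exists>e \<in> Y - X. indep (insert e X)))"

definition mrank :: "'a set \<Rightarrow> ('a set \<Rightarrow> bool) \<Rightarrow> 'a set \<Rightarrow> nat" where
  "mrank E indep X = Max {card Y | Y. Y \<subseteq> X \<and> indep Y}"

definition basis :: "'a set \<Rightarrow> ('a set \<Rightarrow> bool) \<Rightarrow> 'a set \<Rightarrow> bool" where
  "basis E indep B \<longleftrightarrow> indep B \<and> (\<forall>X. indep X \<and> B \<subseteq> X \<longrightarrow> X = B)"

definition circuit :: "'a set \<Rightarrow> ('a set \<Rightarrow> bool) \<Rightarrow> 'a set \<Rightarrow> bool" where
  "circuit E indep C \<longleftrightarrow> C \<subseteq> E \<and> \<not> indep C \<and> (\<forall>x \<in> C. indep (C - {x}))"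

definition dual_indep :: "'a set \<Rightarrow> ('a set \<Rightarrow> bool) \<Rightarrow> 'a set \<Rightarrow> bool" where
  "dual_indep E indep X \<longleftrightarrow> X \<subseteq> E \<and> (\<exists>B. basis E indep B \<and> X \<inter> B = {})"

definition cocircuit :: "'a set \<Rightarrow> ('a set \<Rightarrow> bool) \<Rightarrow> 'a set \<Rightarrow> bool" where
  "cocircuit E indep C \<longleftrightarrow> circuit E (dual_indep E indep) C"

definition spike :: "nat \<Rightarrow> nat \<Rightarrow> 'a set \<Rightarrow> ('a set \<Rightarrow> bool) \<Rightarrow> bool" where
  "spike t r E indep \<longleftrightarrow> matroid E indep \<and> r \<ge> t \<and>
     (\<exists>A :: nat \<Rightarrow> 'a set.
        (\<forall>i \<in> {1..r}. card (A i) = 2) \<and>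
        (\<forall>i \<in> {1..r}. \<forall>j \<in> {1..r}. i \<noteq> j \<longrightarrow> A i \<inter> A j = {}) \<and>
        (\<Union>i \<in> {1..r}. A i) = E \<and>
        (\<forall>J. J \<subseteq> {1..r} \<and> card J = t \<longrightarrow>
             circuit E indep (\<Union>j \<in> J. A j) \<and> cocircuit E indep (\<Union>j \<in> J. A j)))"

end

theory Submission
  imports Defs
begin

lemma basis_card_ge:
  assumes m: "matroid E indep" and b: "basis E indep B" and y: "indep Y"
  shows "card Y \<le> card B"
proof (rule ccontr)
  assume "\<not> card Y \<le> card B"
  hence "card B < card Y" by simp
  moreover have "indep B" using b by (simp add: basis_def)
  moreover have aug: "\<forall>X Y. indep X \<and> indep Y \<and> card X < card Y \<longrightarrow> (\<exists>e \<in> Y - X. indep (insert e X))"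
    using m unfolding matroid_def by (elim conjE)
  ultimately obtain e where e: "e \<in> Y - B" "indep (insert e B)"
    using y by blast
  have "\<forall>X. indep X \<and> B \<subseteq> X \<longrightarrow> X = B" using b unfolding basis_def by (elim conjE)
  hence "insert e B = B" using e(2) by blast
  thus False using e by blast
qed

lemma matroid_finite: "matroid E indep \<Longrightarrow> finite E"
  unfolding matroid_def by (elim conjE)

lemma indep_sub: "matroid E indep \<Longrightarrow> indep X \<Longrightarrow> X \<subseteq> E"
proof -
  assume "matroid E indep"
  hence "\<forall>X. indep X \<longrightarrow> X \<subseteq> E" unfolding matroid_def by (elim conjE)
  thus "indep X \<Longrightarrow> X \<subseteq> E" by blast
qed

lemma indep_subset: "matroid E indep \<Longrightarrow> indep Y \<Longrightarrow> X \<subseteq> Y \<Longrightarrow> indep X"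
proof -
  assume "matroid E indep"
  hence "\<forall>X Y. indep Y \<and> X \<subseteq> Y \<longrightarrow> indep X" unfolding matroid_def by (elim conjE)
  thus "indep Y \<Longrightarrow> X \<subseteq> Y \<Longrightarrow> indep X" by blast
qed

lemma mrank_basis:
  assumes m: "matroid E indep" and b: "basis E indep B"
  shows "mrank E indep E = card B"
proof -
  let ?S = "{card Y | Y. Y \<subseteq> E \<and> indep Y}"
  have fin: "finite ?S"
  proof -
    have "?S \<subseteq> card ` Pow E" by blast
    thus ?thesis using finite_subset matroid_finite[OF m] by blast
  qed
  have "indep B" using b by (simp add: basis_def)
  hence inS: "card B \<in> ?S" using indep_sub[OF m] by blast
  have le: "\<And>x. x \<in> ?S \<Longrightarrow> x \<le> card B" using basis_card_ge[OF m b] by blast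
  show ?thesis unfolding mrank_def by (rule Max_eqI[OF fin le inS])
qed

lemma exists_basis_ext:
  assumes m: "matroid E indep" and x: "indep X"
  shows "\<exists>B. basis E indep B \<and> X \<subseteq> B"
proof -
  let ?S = "{Y. indep Y \<and> X \<subseteq> Y}"
  have finE: "finite E" using matroid_finite[OF m] .
  have "?S \<subseteq> Pow E" using indep_sub[OF m] by blast
  hence fin: "finite ?S" using finE by (meson finite_Pow_iff finite_subset)
  have ne: "X \<in> ?S" using x by blast
  define mm where "mm = Max (card ` ?S)"
  have "mm \<in> card ` ?S" unfolding mm_def using fin ne by (intro Max_in) auto
  then obtain Y where Y: "Y \<in> ?S" "card Y = mm" by blast
  have "basis E indep Y"
    unfolding basis_def
  proof (intro conjI allI impI)
    show "indep Y" using Y by blast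
    fix Z assume z: "indep Z \<and> Y \<subseteq> Z"
    hence "Z \<in> ?S" using Y by blast
    hence "card Z \<le> mm" unfolding mm_def using fin by simp
    moreover have "finite Z" using z indep_sub[OF m] finE finite_subset by blast
    moreover have "card Y \<le> card Z" using z \<open>finite Z\<close> card_mono by blast
    ultimately have "card Y = card Z" using Y(2) by simp
    have "Y = Z" by (rule card_subset_eq[OF \<open>finite Z\<close>]) (use z \<open>card Y = card Z\<close> in auto)
    thus "Z = Y" by simp
  qed
  thus ?thesis using Y by blast
qed

lemma dual_rank:
  assumes m: "matroid E indep" and b: "basis E indep B" and cb: "card B = r"
    and ce: "card E = 2 * r"
  shows "mrank E (dual_indep E indep) E = r"
proof -
  have finE: "finite E" using matroid_finite[OF m] .
  have BE: "B \<subseteq> E" using b indep_sub[OF m] unfolding basis_def by blast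
  let ?S = "{card Y | Y. Y \<subseteq> E \<and> dual_indep E indep Y}"
  have fin: "finite ?S"
  proof -
    have "?S \<subseteq> card ` Pow E" by blast
    thus ?thesis using finite_subset finE by blast
  qed
  have "dual_indep E indep (E - B)" unfolding dual_indep_def using b by blast
  moreover have "card (E - B) = r" using BE finE cb ce by (simp add: card_Diff_subset finite_subset)
  ultimately have inS: "r \<in> ?S" by blast
  have le: "x \<le> r" if "x \<in> ?S" for x
  proof -
    obtain Y where Y: "x = card Y" "Y \<subseteq> E" "dual_indep E indep Y" using \<open>x \<in> ?S\<close> by blast
    then obtain B' where B': "basis E indep B'" "Y \<inter> B' = {}" unfolding dual_indep_def by blast
    have "card B' = card B" using mrank_basis[OF m B'(1)] mrank_basis[OF m b] by simp
    have B'E: "B' \<subseteq> E" using B' indep_sub[OF m] unfolding basis_def by blast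
    have "Y \<subseteq> E - B'" using Y B' by blast
    hence "card Y \<le> card (E - B')" using finE by (simp add: card_mono)
    also have "\<dots> = r" using B'E finE \<open>card B' = card B\<close> cb ce by (simp add: card_Diff_subset finite_subset)
    finally show ?thesis using Y by simp
  qed
  show ?thesis unfolding mrank_def by (rule Max_eqI[OF fin le inS])
qed


lemma sum_ind: "finite I \<Longrightarrow> (\<Sum>i\<in>I. if i \<in> Z then 1 else 0::nat) = card (I \<inter> Z)"
  by (simp add: sum.If_cases)

theorem lemma6p2:
  fixes t r :: nat and E :: "'a set" and indep :: "'a set \<Rightarrow> bool"
  assumes "t \<ge> 1" and "spike t r E indep"
  shows "mrank E indep E = r \<and> mrank E (dual_indep E indep) E = r"
proof -
  have sp: "matroid E indep \<and> r \<ge> t \<and>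
     (\<exists>A :: nat \<Rightarrow> 'a set.
        (\<forall>i \<in> {1..r}. card (A i) = 2) \<and>
        (\<forall>i \<in> {1..r}. \<forall>j \<in> {1..r}. i \<noteq> j \<longrightarrow> A i \<inter> A j = {}) \<and>
        (\<Union>i \<in> {1..r}. A i) = E \<and>
        (\<forall>J. J \<subseteq> {1..r} \<and> card J = t \<longrightarrow>
             circuit E indep (\<Union>j \<in> J. A j) \<and> cocircuit E indep (\<Union>j \<in> J. A j)))"
    using assms(2) unfolding spike_def .
  have m: "matroid E indep" using sp by (rule conjunct1)
  have tr: "t \<le> r" using sp by (elim conjE)
  have exA: "\<exists>A :: nat \<Rightarrow> 'a set.
        (\<forall>i \<in> {1..r}. card (A i) = 2) \<and>
        (\<forall>i \<in> {1..r}. \<forall>j \<in> {1..r}. i \<noteq> j \<longrightarrow> A i \<inter> A j = {}) \<and>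
        (\<Union>i \<in> {1..r}. A i) = E \<and>
        (\<forall>J. J \<subseteq> {1..r} \<and> card J = t \<longrightarrow>
             circuit E indep (\<Union>j \<in> J. A j) \<and> cocircuit E indep (\<Union>j \<in> J. A j))"
    using sp by (elim conjE)
  obtain A :: "nat \<Rightarrow> 'a set" where
    c2: "\<forall>i \<in> {1..r}. card (A i) = 2" and
    dj: "\<forall>i \<in> {1..r}. \<forall>j \<in> {1..r}. i \<noteq> j \<longrightarrow> A i \<inter> A j = {}" and
    un: "(\<Union>i \<in> {1..r}. A i) = E" and
    cc: "\<forall>J. J \<subseteq> {1..r} \<and> card J = t \<longrightarrow>
             circuit E indep (\<Union>j \<in> J. A j) \<and> cocircuit E indep (\<Union>j \<in> J. A j)"
    using exA by (elim exE conjE)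
  have finA: "finite (A i)" if "i \<in> {1..r}" for i 
  proof (rule ccontr)
    assume inf: "infinite (A i)"
    have "card (A i) = 2" using c2 that by blast
    thus False using inf by simp
  qed
  have meet: "(\<Union>j \<in> J. A j) \<inter> B \<noteq> {}"
    if "basis E indep B" "J \<subseteq> {1..r}" "card J = t" for B J
  proof
    assume "(\<Union>j \<in> J. A j) \<inter> B = {}"
    moreover have "circuit E (dual_indep E indep) (\<Union>j \<in> J. A j)"
      using cc that unfolding cocircuit_def by blast
    ultimately have "dual_indep E indep (\<Union>j \<in> J. A j)" and "\<not> dual_indep E indep (\<Union>j \<in> J. A j)"
      using that(1) unfolding circuit_def dual_indep_def by auto
    thus False by simp
  qed
  have notsub: "\<not> (\<Union>j \<in> J. A j) \<subseteq> B"
    if "basis E indep B" "J \<subseteq> {1..r}" "card J = t" for B J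
  proof
    assume "(\<Union>j \<in> J. A j) \<subseteq> B"
    moreover have "indep B" using that unfolding basis_def by blast
    moreover have "circuit E indep (\<Union>j \<in> J. A j)" using cc that by blast
    moreover have "\<not> indep (\<Union>j \<in> J. A j)" using \<open>circuit E indep (\<Union>j \<in> J. A j)\<close>
      unfolding circuit_def by simp
    ultimately show False using indep_subset[OF m \<open>indep B\<close>] by metis
  qed
  have cardsum: "card B = (\<Sum>i\<in>{1..r}. card (A i \<inter> B))" if "B \<subseteq> E" for B
  proof -
    have "B = (\<Union>i \<in> {1..r}. A i \<inter> B)" using un that by blast
    moreover have "card (\<Union>i \<in> {1..r}. A i \<inter> B) = (\<Sum>i\<in>{1..r}. card (A i \<inter> B))"
      by (rule card_UN_disjoint) (simp, simp add: finA, use dj in blast)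
    ultimately show ?thesis by simp
  qed
  have cE: "card E = 2 * r"
  proof -
    have "card E = (\<Sum>i\<in>{1..r}. card (A i \<inter> E))" using cardsum by simp
    also have "\<dots> = (\<Sum>i\<in>{1..r}. 2)"
    proof (intro sum.cong refl)
      fix i assume i: "i \<in> {1..r}"
      hence "A i \<inter> E = A i" using un by blast
      thus "card (A i \<inter> E) = 2" using c2 i by simp
    qed
    finally show ?thesis by simp
  qed
  have indB: "B \<subseteq> E" if "basis E indep B" for B
  proof -
    have "indep B" using that by (simp add: basis_def)
    thus ?thesis by (rule indep_sub[OF m])
  qed
  define J0 where "J0 = {1..t}"
  have J0: "J0 \<subseteq> {1..r}" "card J0 = t" unfolding J0_def using tr by auto
  have tin: "t \<in> {1..r}" using assms(1) tr by auto
  obtain x where x: "x \<in> A t" 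
  proof -
    have "A t \<noteq> {}"
    proof
      assume e: "A t = {}"
      have "card (A t) = 2" using c2 tin by blast
      thus False using e by simp
    qed
    thus ?thesis using that by blast
  qed
  let ?U = "\<Union>j \<in> J0. A j"
  have xU: "x \<in> ?U" using x assms(1) unfolding J0_def by auto
  have Ai_sub: "A i \<subseteq> ?U - {x}" if "i \<in> {1..r}" "i < t" for i
  proof -
    have "A i \<inter> A t = {}" using dj that tin by auto
    thus ?thesis using that x unfolding J0_def by auto
  qed
  have circ: "circuit E indep ?U" and cocirc: "circuit E (dual_indep E indep) ?U"
    using cc J0 unfolding cocircuit_def by blast+
  have "indep (?U - {x})" using circ xU unfolding circuit_def by blast
  then obtain B1 where B1: "basis E indep B1" "?U - {x} \<subseteq> B1" using exists_basis_ext[OF m] by blast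
  have "dual_indep E indep (?U - {x})" using cocirc xU unfolding circuit_def by blast
  then obtain B2 where B2: "basis E indep B2" "(?U - {x}) \<inter> B2 = {}" unfolding dual_indep_def by blast
  define Z where "Z = {i \<in> {1..r}. A i \<inter> B1 = {}}"
  have cZ: "card Z \<le> t - 1"
  proof (rule ccontr)
    assume "\<not> card Z \<le> t - 1"
    hence tZ: "t \<le> card Z" by simp
    obtain J where J: "J \<subseteq> Z" "card J = t" using obtain_subset_with_card_n[OF tZ] by blast
    have "J \<subseteq> {1..r}" using J unfolding Z_def by auto
    moreover have "(\<Union>j \<in> J. A j) \<inter> B1 = {}" using J unfolding Z_def by auto
    ultimately show False using meet[OF B1(1)] J by blast
  qed
  have term1: "1 + (if i < t then 1 else 0) \<le> card (A i \<inter> B1) + (if i \<in> Z then 1 else 0)"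
    if "i \<in> {1..r}" for i
  proof (cases "i < t")
    case True
    hence "A i \<inter> B1 = A i" using Ai_sub[OF that] B1 by blast
    thus ?thesis using c2 that True by simp
  next
    case False
    show ?thesis
    proof (cases "i \<in> Z")
      case False
      hence "A i \<inter> B1 \<noteq> {}" using that unfolding Z_def by blast
      hence "card (A i \<inter> B1) \<ge> 1" using finA[OF that]
        by (simp add: Suc_le_eq card_gt_0_iff)
      thus ?thesis using False \<open>\<not> i < t\<close> by simp
    qed (use False in simp)
  qed
  have s1: "(\<Sum>i\<in>{1..r}. 1 + (if i < t then 1 else 0::nat)) = r + (t - 1)"
  proof -
    have "(\<Sum>i\<in>{1..r}. 1 + (if i < t then 1 else 0::nat)) = r + card ({1..r} \<inter> {i. i < t})"
    proof -
      have "(\<Sum>i\<in>{1..r}. 1 + (if i < t then 1 else 0::nat)) = (\<Sum>i\<in>{1..r}. 1::nat) + (\<Sum>i\<in>{1..r}. if i \<in> {i. i < t} then 1 else 0::nat)"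
        by (simp only: sum.distrib mem_Collect_eq)
      thus ?thesis by (simp only: sum_ind[of "{1..r}" "{i. i < t}"] finite_atLeastAtMost) simp
    qed
    moreover have "{1..r} \<inter> {i. i < t} = {1..<t}" using tr by auto
    ultimately show ?thesis by simp
  qed
  have s2: "(\<Sum>i\<in>{1..r}. card (A i \<inter> B1) + (if i \<in> Z then 1 else 0::nat)) = card B1 + card Z"
  proof -
    have "{1..r} \<inter> Z = Z" unfolding Z_def by auto
    thus ?thesis using cardsum[OF indB[OF B1(1)]] by (simp add: sum.distrib sum_ind)
  qed
  have "(\<Sum>i\<in>{1..r}. 1 + (if i < t then 1 else 0::nat)) \<le> (\<Sum>i\<in>{1..r}. card (A i \<inter> B1) + (if i \<in> Z then 1 else 0::nat))"
    by (rule sum_mono) (rule term1)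
  hence "r + (t - 1) \<le> card B1 + card Z" by (simp only: s1 s2)
  hence geB1: "r \<le> card B1" using cZ by simp
  define W where "W = {i \<in> {1..r}. A i \<subseteq> B2}"
  have cW: "card W \<le> t - 1"
  proof (rule ccontr)
    assume "\<not> card W \<le> t - 1"
    hence tW: "t \<le> card W" by simp
    obtain J where J: "J \<subseteq> W" "card J = t" using obtain_subset_with_card_n[OF tW] by blast
    have "J \<subseteq> {1..r}" using J unfolding W_def by auto
    moreover have "(\<Union>j \<in> J. A j) \<subseteq> B2" using J unfolding W_def by auto
    ultimately show False using notsub[OF B2(1)] J by blast
  qed
  have term2: "card (A i \<inter> B2) + (if i < t then 1 else 0) \<le> 1 + (if i \<in> W then 1 else 0)"
    if "i \<in> {1..r}" for i
  proof (cases "i < t")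
    case True
    hence "A i \<inter> B2 = {}" using Ai_sub[OF that] B2 by blast
    thus ?thesis using True by simp
  next
    case False
    show ?thesis
    proof (cases "i \<in> W")
      case True
      have "card (A i \<inter> B2) \<le> card (A i)" using finA[OF that] by (simp add: card_mono)
      thus ?thesis using True False c2 that by simp
    next
      case nW: False
      hence "A i \<inter> B2 \<subset> A i" using that unfolding W_def by blast
      hence "card (A i \<inter> B2) < 2" using psubset_card_mono[OF finA[OF that]] c2 that by simp
      thus ?thesis using False nW by simp
    qed
  qed
  have s3: "(\<Sum>i\<in>{1..r}. 1 + (if i \<in> W then 1 else 0::nat)) = r + card W"
  proof -
    have "{1..r} \<inter> W = W" unfolding W_def by auto
    moreover have "(\<Sum>i\<in>{1..r}. 1 + (if i \<in> W then 1 else 0::nat)) = (\<Sum>i\<in>{1..r}. 1::nat) + (\<Sum>i\<in>{1..r}. if i \<in> W then 1 else 0::nat)"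
      by (simp only: sum.distrib)
    ultimately show ?thesis by (simp only: sum_ind[of "{1..r}" W] finite_atLeastAtMost) simp
  qed
  have s4: "(\<Sum>i\<in>{1..r}. card (A i \<inter> B2) + (if i < t then 1 else 0::nat)) = card B2 + (t - 1)"
  proof -
    have "{1..r} \<inter> {i. i < t} = {1..<t}" using tr by auto
    moreover have "(\<Sum>i\<in>{1..r}. if i \<in> {i. i < t} then 1 else 0::nat) = card ({1..r} \<inter> {i. i < t})"
      by (rule sum_ind) simp
    ultimately have "(\<Sum>i\<in>{1..r}. if i < t then 1 else 0::nat) = t - 1" by simp
    thus ?thesis using cardsum[OF indB[OF B2(1)]] by (simp add: sum.distrib)
  qed
  have "(\<Sum>i\<in>{1..r}. card (A i \<inter> B2) + (if i < t then 1 else 0::nat)) \<le> (\<Sum>i\<in>{1..r}. 1 + (if i \<in> W then 1 else 0::nat))"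
    by (rule sum_mono) (rule term2)
  hence "card B2 + (t - 1) \<le> r + card W" by (simp only: s3 s4)
  hence leB2: "card B2 \<le> r" using cW by simp
  have eq: "card B1 = card B2" using mrank_basis[OF m B1(1)] mrank_basis[OF m B2(1)] by simp
  hence cB1: "card B1 = r" using geB1 leB2 by simp
  show ?thesis using mrank_basis[OF m B1(1)] cB1 dual_rank[OF m B1(1) cB1 cE] by simp
qed

end
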